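(* Let $A\subseteq\mathbb N$ be such that both $A$ and $\mathbb N\setminus A$ are infinite. Then there is no $\{\cup,\cap,\overline{\phantom{c}},+,/\}$-circuit $C$ with $I(C)=A$. (In particular, no such circuit describes the set of prime numbers.)
   Context: Natural numbers include $0$. For $A,B\subseteq\mathbb N$: $A\cup B$, $A\cap B$ are the usual operations, $\overline{A}=\mathbb N\setminus A$, $A+B=\{a+b: a\in A, b\in B\}$, $A\times B=\{a\cdot b: a\in A, b\in B\}$, and $A/B=\{c\in\mathbb N:\exists a\in A\ \exists b\in B\setminus\{0\}: a=c\cdot b\}$ (exact integer division without remainder or rounding). For $\emptyset\ne\mathcal O\subseteq\{\cup,\cap,\overline{\phantom{c}},+,\times,/\}$, an $\mathcal O$-circuit $C=(V,E,g_C,\alpha)$ is a finite acyclic directed multigraph with gate set $V\subseteq\mathbb N$, every gate having indegree $0$, $1$ or $2$, a designated output gate $g_C\in V$, and a labeling $\alpha$: gates of indegree $0$ (input gates) are labeled by natural numbers, gates of indegree $1$ are labeled $\overline{\phantom{c}}$ (allowed only if $\overline{\phantom{c}}\in\mathcal O$), and gates of indegree $2$ are labeled by an operation in $\mathcal O\setminus\{\overline{\phantom{c}}\}$. The result set $I(g)\subseteq\mathbb N$ is defined inductively: $I(g)=\{\alpha(g)\}$ for an input gate; $I(g)=\mathbb N\setminus I(p)$ for a complement gate with predecessor $p$; $I(g)=I(g_1)\,\sigma\,I(g_2)$ for a gate labeled $\sigma$ with predecessors $g_1\le g_2$ (a double edge from one gate gives $g_1=g_2$). $I(C)=I(g_C)$.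 *)

theory Defs
  imports Main
begin

definition set_plus_nat :: "nat set \<Rightarrow> nat set \<Rightarrow> nat set" where
  "set_plus_nat A B = {a + b | a b. a \<in> A \<and> b \<in> B}"

definition set_times_nat :: "nat set \<Rightarrow> nat set \<Rightarrow> nat set" where
  "set_times_nat A B = {a * b | a b. a \<in> A \<and> b \<in> B}"

definition set_div_nat :: "nat set \<Rightarrow> nat set \<Rightarrow> nat set" where
  "set_div_nat A B = {c. \<exists>a\<in>A. \<exists>b\<in>B - {0}. a = c * b}"

datatype op = OUn | OInt | OCompl | OPlus | OTimes | ODiv

datatype label = LInput nat | LGate op

text \<open>A circuit: finite gate set V of naturals, for each gate the list of its
  predecessors (the in-edges of the multigraph, sorted so that g1 \<le> g2;
  a double edge gives [p, p]), an output gate and a labelling.\<close>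
record circuit =
  gates :: "nat set"
  preds :: "nat \<Rightarrow> nat list"
  outg  :: nat
  lab   :: "nat \<Rightarrow> label"

definition edge_rel :: "circuit \<Rightarrow> (nat \<times> nat) set" where
  "edge_rel C = {(p, g). g \<in> gates C \<and> p \<in> set (preds C g)}"

definition is_circuit :: "op set \<Rightarrow> circuit \<Rightarrow> bool" where
  "is_circuit Ops C \<longleftrightarrow>
     Ops \<noteq> {} \<and>
     finite (gates C) \<and> outg C \<in> gates C \<and>
     acyclic (edge_rel C) \<and>
     (\<forall>g \<in> gates C.
        set (preds C g) \<subseteq> gates C \<and> sorted (preds C g) \<and> length (preds C g) \<le> 2 \<and>
        (length (preds C g) = 0 \<longrightarrow> (\<exists>n. lab C g = LInput n)) \<and>
        (length (preds C g) = 1 \<longrightarrow> lab C g = LGate OCompl \<and> OCompl \<in> Ops) \<and>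
        (length (preds C g) = 2 \<longrightarrow> (\<exists>\<sigma>. lab C g = LGate \<sigma> \<and> \<sigma> \<in> Ops \<and> \<sigma> \<noteq> OCompl)))"

fun apply_op :: "op \<Rightarrow> nat set \<Rightarrow> nat set \<Rightarrow> nat set" where
  "apply_op OUn A B = A \<union> B"
| "apply_op OInt A B = A \<inter> B"
| "apply_op OCompl A B = UNIV - A"
| "apply_op OPlus A B = set_plus_nat A B"
| "apply_op OTimes A B = set_times_nat A B"
| "apply_op ODiv A B = set_div_nat A B"

text \<open>val is an evaluation of C: it satisfies the inductive defining equations of I(g)
  at every gate (by acyclicity there is exactly one such assignment on the gates).\<close>
definition is_eval :: "circuit \<Rightarrow> (nat \<Rightarrow> nat set) \<Rightarrow> bool" where
  "is_eval C val \<longleftrightarrow>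
     (\<forall>g \<in> gates C. val g =
        (case lab C g of
           LInput n \<Rightarrow> {n}
         | LGate OCompl \<Rightarrow> UNIV - val (preds C g ! 0)
         | LGate \<sigma> \<Rightarrow> apply_op \<sigma> (val (preds C g ! 0)) (val (preds C g ! 1))))"

definition result :: "circuit \<Rightarrow> nat set" where
  "result C = (THE S. \<exists>val. is_eval C val \<and> val (outg C) = S)"

end

theory Submission
  imports Defs
begin

definition fc :: "nat set \<Rightarrow> bool" where
  "fc S \<longleftrightarrow> finite S \<or> finite (UNIV - S)"

lemma cofin_bound:
  assumes "finite (UNIV - (A::nat set))"
  obtains N where "\<And>n. n \<ge> N \<Longrightarrow> n \<in> A"
proof -
  obtain k where "\<forall>n\<in>UNIV - A. n < k" using assms finite_nat_set_iff_bounded by blast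
  then show ?thesis using that[of k] by (meson DiffI UNIV_I not_le)
qed

lemma fin_bound:
  assumes "finite (A::nat set)"
  obtains k where "A \<subseteq> {..<k}"
  using assms finite_nat_set_iff_bounded by (metis lessThan_iff subsetI)

lemma plus_cof:
  assumes "finite (UNIV - A)" "b \<in> B"
  shows "finite (UNIV - set_plus_nat A B)"
proof -
  obtain N where N: "\<And>n. n \<ge> N \<Longrightarrow> n \<in> A" using cofin_bound assms(1) by blast
  have "UNIV - set_plus_nat A B \<subseteq> {..<N+b}"
  proof
    fix n assume n: "n \<in> UNIV - set_plus_nat A B"
    show "n \<in> {..<N+b}"
    proof (rule ccontr)
      assume "n \<notin> {..<N+b}"
      then have "n - b \<in> A" "n = (n - b) + b" using N by auto
      then have "n \<in> set_plus_nat A B" using assms(2) unfolding set_plus_nat_def by blast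
      then show False using n by blast
    qed
  qed
  then show ?thesis using finite_subset by blast
qed

lemma plus_comm: "set_plus_nat A B = set_plus_nat B A"
  unfolding set_plus_nat_def by (auto; metis add.commute)

lemma fc_plus: "fc A \<Longrightarrow> fc B \<Longrightarrow> fc (set_plus_nat A B)"
proof -
  assume a: "fc A" and b: "fc B"
  show ?thesis
  proof (cases "A = {} \<or> B = {}")
    case True
    then have "set_plus_nat A B = {}" unfolding set_plus_nat_def by auto
    then show ?thesis unfolding fc_def by simp
  next
    case False
    then obtain x y where xy: "x \<in> A" "y \<in> B" by blast
    show ?thesis
    proof (cases "finite A \<and> finite B")
      case True
      have "set_plus_nat A B = (\<lambda>(a,b). a+b) ` (A \<times> B)"
        unfolding set_plus_nat_def by auto
      then show ?thesis using True unfolding fc_def by simp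
    next
      case False
      then have "finite (UNIV - A) \<or> finite (UNIV - B)" using a b unfolding fc_def by blast
      then show ?thesis
        using plus_cof[of A y B] plus_cof[of B x A] xy plus_comm[of A B] unfolding fc_def by auto
    qed
  qed
qed

lemma fc_div: "fc A \<Longrightarrow> fc (set_div_nat A B)"
proof -
  assume a: "fc A"
  show ?thesis
  proof (cases "B - {0} = {}")
    case True
    then have "set_div_nat A B = {}" unfolding set_div_nat_def by auto
    then show ?thesis unfolding fc_def by simp
  next
    case False
    then obtain b where b: "b \<in> B" "b > 0" by blast
    show ?thesis
    proof (cases "finite A")
      case True
      then obtain k where k: "A \<subseteq> {..<k}" using fin_bound by blast
      have "set_div_nat A B \<subseteq> {..<k}"
      proof
        fix c assume "c \<in> set_div_nat A B"
        then obtain a d where "a \<in> A" "d > 0" "a = c * d" unfolding set_div_nat_def by auto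
        then have "c \<le> a" "a < k" using k by auto
        then show "c \<in> {..<k}" by simp
      qed
      then show ?thesis unfolding fc_def using finite_subset by blast
    next
      case False
      then have "finite (UNIV - A)" using a unfolding fc_def by blast
      then obtain N where N: "\<And>n. n \<ge> N \<Longrightarrow> n \<in> A" using cofin_bound by blast
      have "UNIV - set_div_nat A B \<subseteq> {..<N}"
      proof
        fix c assume c: "c \<in> UNIV - set_div_nat A B"
        show "c \<in> {..<N}"
        proof (rule ccontr)
          assume "c \<notin> {..<N}"
          moreover have "c \<le> c * b" using b by simp
          ultimately have "c * b \<ge> N" by (meson lessThan_iff not_le le_trans)
          then have "c * b \<in> A" using N by blast
          then have "c \<in> set_div_nat A B" using b unfolding set_div_nat_def by auto
          then show False using c by blast
        qed
      qed
      then show ?thesis unfolding fc_def using finite_subset by blast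
    qed
  qed
qed

lemma fc_compl: "fc A \<Longrightarrow> fc (UNIV - A)"
  unfolding fc_def by (auto simp: Diff_Diff_Int)

lemma fc_un: "fc A \<Longrightarrow> fc B \<Longrightarrow> fc (A \<union> B)"
  unfolding fc_def by (auto intro: finite_subset)

lemma fc_int: "fc A \<Longrightarrow> fc B \<Longrightarrow> fc (A \<inter> B)"
  unfolding fc_def by (auto simp: Diff_Int intro: finite_subset)

lemma edge_fin: "is_circuit Ops C \<Longrightarrow> finite (edge_rel C)"
proof -
  assume c: "is_circuit Ops C"
  have "edge_rel C \<subseteq> gates C \<times> gates C" using c unfolding is_circuit_def edge_rel_def by auto
  then show ?thesis using c unfolding is_circuit_def by (meson finite_SigmaI finite_subset)
qed

lemma edge_wf: "is_circuit Ops C \<Longrightarrow> wf (edge_rel C)"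
  using edge_fin finite_acyclic_wf is_circuit_def by blast

lemma pred0: "g \<in> gates C \<Longrightarrow> length (preds C g) \<ge> 1 \<Longrightarrow> (preds C g ! 0, g) \<in> edge_rel C"
  unfolding edge_rel_def by (auto intro!: nth_mem)

lemma pred1: "g \<in> gates C \<Longrightarrow> length (preds C g) \<ge> 2 \<Longrightarrow> (preds C g ! 1, g) \<in> edge_rel C"
  unfolding edge_rel_def by (auto intro!: nth_mem)

lemma edge_gates: "is_circuit Ops C \<Longrightarrow> (p, g) \<in> edge_rel C \<Longrightarrow> p \<in> gates C"
  unfolding is_circuit_def edge_rel_def by blast

lemma gate_shape:
  assumes "is_circuit Ops C" "g \<in> gates C"
  shows "(\<exists>n. lab C g = LInput n) \<or> (lab C g = LGate OCompl \<and> length (preds C g) = 1 \<and> OCompl \<in> Ops)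
    \<or> (\<exists>\<sigma>. lab C g = LGate \<sigma> \<and> \<sigma> \<in> Ops \<and> \<sigma> \<noteq> OCompl \<and> length (preds C g) = 2)"
proof -
  have "length (preds C g) \<le> 2" using assms unfolding is_circuit_def by blast
  then have "length (preds C g) = 0 \<or> length (preds C g) = 1 \<or> length (preds C g) = 2" by linarith
  then show ?thesis using assms unfolding is_circuit_def by metis
qed

lemma eval_gate:
  assumes "is_eval C val" "g \<in> gates C"
  shows "lab C g = LInput n \<Longrightarrow> val g = {n}"
    and "lab C g = LGate OCompl \<Longrightarrow> val g = UNIV - val (preds C g ! 0)"
    and "lab C g = LGate \<sigma> \<Longrightarrow> \<sigma> \<noteq> OCompl \<Longrightarrow> val g = apply_op \<sigma> (val (preds C g ! 0)) (val (preds C g ! 1))"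
  using assms unfolding is_eval_def by (auto split: op.splits)

lemma eval_fc:
  assumes c: "is_circuit {OUn, OInt, OCompl, OPlus, ODiv} C" and e: "is_eval C val"
  shows "g \<in> gates C \<Longrightarrow> fc (val g)"
proof (induct g rule: wf_induct[OF edge_wf[OF c]])
  case (1 g)
  note IH = 1(1) and g = 1(2)
  from gate_shape[OF c g] show ?case
  proof (elim disjE exE conjE)
    fix n assume "lab C g = LInput n"
    then show ?thesis using eval_gate(1)[OF e g] unfolding fc_def by simp
  next
    assume l: "lab C g = LGate OCompl" "length (preds C g) = 1"
    have "preds C g ! 0 \<in> gates C" "(preds C g ! 0, g) \<in> edge_rel C"
      using pred0[OF g] l edge_gates[OF c] by auto
    then show ?thesis using IH eval_gate(2)[OF e g l(1)] fc_compl by auto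
  next
    fix \<sigma> assume l: "lab C g = LGate \<sigma>" "\<sigma> \<in> {OUn, OInt, OCompl, OPlus, ODiv}" "\<sigma> \<noteq> OCompl"
      "length (preds C g) = 2"
    have "preds C g ! 0 \<in> gates C" "(preds C g ! 0, g) \<in> edge_rel C"
      "preds C g ! 1 \<in> gates C" "(preds C g ! 1, g) \<in> edge_rel C"
      using pred0[OF g] pred1[OF g] l edge_gates[OF c] by auto
    then have "fc (val (preds C g ! 0))" "fc (val (preds C g ! 1))" using IH by auto
    then show ?thesis using eval_gate(3)[OF e g l(1,3)] l(2)
      using fc_un fc_int fc_plus fc_div fc_compl by auto
  qed
qed

lemma eval_unique:
  assumes c: "is_circuit Ops C" and e1: "is_eval C v1" and e2: "is_eval C v2"
  shows "g \<in> gates C \<Longrightarrow> v1 g = v2 g"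
proof (induct g rule: wf_induct[OF edge_wf[OF c]])
  case (1 g)
  note IH = 1(1) and g = 1(2)
  from gate_shape[OF c g] show ?case
  proof (elim disjE exE conjE)
    fix n assume "lab C g = LInput n"
    then show ?thesis using eval_gate(1)[OF e1 g] eval_gate(1)[OF e2 g] by simp
  next
    assume l: "lab C g = LGate OCompl" "length (preds C g) = 1"
    have "preds C g ! 0 \<in> gates C" "(preds C g ! 0, g) \<in> edge_rel C"
      using pred0[OF g] l edge_gates[OF c] by auto
    then show ?thesis using IH eval_gate(2)[OF e1 g l(1)] eval_gate(2)[OF e2 g l(1)] by auto
  next
    fix \<sigma> assume l: "lab C g = LGate \<sigma>" "\<sigma> \<in> Ops" "\<sigma> \<noteq> OCompl"
      "length (preds C g) = 2"
    have "preds C g ! 0 \<in> gates C" "(preds C g ! 0, g) \<in> edge_rel C"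
      "preds C g ! 1 \<in> gates C" "(preds C g ! 1, g) \<in> edge_rel C"
      using pred0[OF g] pred1[OF g] l edge_gates[OF c] by auto
    then show ?thesis using IH eval_gate(3)[OF e1 g l(1,3)] eval_gate(3)[OF e2 g l(1,3)] by auto
  qed
qed

definition evalH :: "circuit \<Rightarrow> (nat \<Rightarrow> nat set) \<Rightarrow> nat \<Rightarrow> nat set" where
  "evalH C f g = (case lab C g of
           LInput n \<Rightarrow> {n}
         | LGate OCompl \<Rightarrow> UNIV - f (preds C g ! 0)
         | LGate \<sigma> \<Rightarrow> apply_op \<sigma> (f (preds C g ! 0)) (f (preds C g ! 1)))"

lemma eval_exists:
  assumes c: "is_circuit Ops C"
  shows "is_eval C (wfrec (edge_rel C) (evalH C))"
proof -
  define v where "v = wfrec (edge_rel C) (evalH C)"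
  have "v g = (case lab C g of
           LInput n \<Rightarrow> {n}
         | LGate OCompl \<Rightarrow> UNIV - v (preds C g ! 0)
         | LGate \<sigma> \<Rightarrow> apply_op \<sigma> (v (preds C g ! 0)) (v (preds C g ! 1)))"
    if g: "g \<in> gates C" for g
  proof -
    have v: "v g = evalH C (cut v (edge_rel C) g) g"
      unfolding v_def by (rule wfrec[OF edge_wf[OF c]])
    from gate_shape[OF c g] show ?thesis
    proof (elim disjE exE conjE)
      fix n assume "lab C g = LInput n"
      then show ?thesis using v unfolding evalH_def by simp
    next
      assume l: "lab C g = LGate OCompl" "length (preds C g) = 1"
      have "(preds C g ! 0, g) \<in> edge_rel C"
        using pred0[OF g] l by auto
      then show ?thesis using v l unfolding evalH_def by (simp add: cut_apply)
    next
      fix \<sigma> assume l: "lab C g = LGate \<sigma>" "\<sigma> \<in> Ops" "\<sigma> \<noteq> OCompl"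
        "length (preds C g) = 2"
      have "(preds C g ! 0, g) \<in> edge_rel C" "(preds C g ! 1, g) \<in> edge_rel C"
        using pred0[OF g] pred1[OF g] l by auto
      then show ?thesis using v l unfolding evalH_def by (cases \<sigma>) (simp_all add: cut_apply)
    qed
  qed
  then show ?thesis unfolding is_eval_def v_def by blast
qed

theorem corollary3:
  fixes A :: "nat set"
  assumes "infinite A" and "infinite (UNIV - A)"
  shows "\<not> (\<exists>C. is_circuit {OUn, OInt, OCompl, OPlus, ODiv} C \<and> result C = A)"
proof
  assume "\<exists>C. is_circuit {OUn, OInt, OCompl, OPlus, ODiv} C \<and> result C = A"
  then obtain C where c: "is_circuit {OUn, OInt, OCompl, OPlus, ODiv} C" and r: "result C = A" by blast
  define v where "v = wfrec (edge_rel C) (evalH C)"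
  have e: "is_eval C v" unfolding v_def by (rule eval_exists[OF c])
  have o: "outg C \<in> gates C" using c unfolding is_circuit_def by blast
  have "result C = v (outg C)"
    unfolding result_def
  proof (rule the_equality)
    show "\<exists>val. is_eval C val \<and> val (outg C) = v (outg C)" using e by blast
  next
    fix S assume "\<exists>val. is_eval C val \<and> val (outg C) = S"
    then obtain w where "is_eval C w" "w (outg C) = S" by blast
    then show "S = v (outg C)" using eval_unique[OF c _ e o] by metis
  qed
  then have "fc A" using r eval_fc[OF c e o] by simp
  then show False using assms unfolding fc_def by blast
qed

end
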